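(* Let $P$ be a set of $n\geq 5$ points in general position in the plane such that exactly $5$ points of $P$ lie on the boundary of the convex hull of $P$. Then $\mu(D(P))\geq\binom{n}{2}-9$.
   Context: General position means no three points collinear. $D(P)$ is the graph whose vertices are all closed segments with both endpoints in $P$, two adjacent iff disjoint. For a graph $G$ and $U\subseteq V(G)$, two distinct vertices $x,y\in U$ are $U$-mutually visible if $G$ contains a shortest $x$-$y$ path none of whose internal vertices lies in $U$; $U$ is a mutual-visibility set if every two distinct vertices of $U$ are $U$-mutually visible. $\mu(G)$ is the maximum size of a mutual-visibility set of $G$. *)

theory Defs
  imports "HOL-Analysis.Analysis"
begin

definition is_walk :: "'v set \<Rightarrow> ('v \<Rightarrow> 'v \<Rightarrow> bool) \<Rightarrow> 'v list \<Rightarrow> bool" where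
  "is_walk V E xs \<longleftrightarrow> xs \<noteq> [] \<and> set xs \<subseteq> V \<and>
     (\<forall>i. Suc i < length xs \<longrightarrow> E (xs ! i) (xs ! Suc i))"

definition is_shortest_path :: "'v set \<Rightarrow> ('v \<Rightarrow> 'v \<Rightarrow> bool) \<Rightarrow> 'v \<Rightarrow> 'v \<Rightarrow> 'v list \<Rightarrow> bool" where
  "is_shortest_path V E x y xs \<longleftrightarrow> is_walk V E xs \<and> hd xs = x \<and> last xs = y \<and>
     (\<forall>ys. is_walk V E ys \<and> hd ys = x \<and> last ys = y \<longrightarrow> length xs \<le> length ys)"

definition internal_vertices :: "'v list \<Rightarrow> 'v set" where
  "internal_vertices xs = set (butlast (tl xs))"

definition mutually_visible :: "'v set \<Rightarrow> ('v \<Rightarrow> 'v \<Rightarrow> bool) \<Rightarrow> 'v set \<Rightarrow> 'v \<Rightarrow> 'v \<Rightarrow> bool" where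
  "mutually_visible V E U x y \<longleftrightarrow>
     (\<exists>xs. is_shortest_path V E x y xs \<and> internal_vertices xs \<inter> U = {})"

definition mutual_visibility_set :: "'v set \<Rightarrow> ('v \<Rightarrow> 'v \<Rightarrow> bool) \<Rightarrow> 'v set \<Rightarrow> bool" where
  "mutual_visibility_set V E U \<longleftrightarrow> U \<subseteq> V \<and>
     (\<forall>x\<in>U. \<forall>y\<in>U. x \<noteq> y \<longrightarrow> mutually_visible V E U x y)"

definition mu :: "'v set \<Rightarrow> ('v \<Rightarrow> 'v \<Rightarrow> bool) \<Rightarrow> nat" where
  "mu V E = Max {card U | U. mutual_visibility_set V E U}"

definition general_position :: "(real^2) set \<Rightarrow> bool" where
  "general_position P \<longleftrightarrow>
     (\<forall>a\<in>P. \<forall>b\<in>P. \<forall>c\<in>P. a \<noteq> b \<and> a \<noteq> c \<and> b \<noteq> c \<longrightarrow> \<not> collinear {a, b, c})"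

definition D_vertices :: "(real^2) set \<Rightarrow> (real^2) set set" where
  "D_vertices P = {closed_segment a b | a b. a \<in> P \<and> b \<in> P \<and> a \<noteq> b}"

definition D_adj :: "(real^2) set \<Rightarrow> (real^2) set \<Rightarrow> bool" where
  "D_adj s t \<longleftrightarrow> s \<inter> t = {}"

end

theory Submission
  imports Defs
begin


definition orient :: "real^2 \<Rightarrow> real^2 \<Rightarrow> real^2 \<Rightarrow> real" where
  "orient a b c = (b$1 - a$1) * (c$2 - a$2) - (b$2 - a$2) * (c$1 - a$1)"

lemma orient_cyc: "orient a b c = orient b c a"
  by (simp add: orient_def algebra_simps)
lemma orient_swap: "orient a c b = - orient a b c"
  by (simp add: orient_def algebra_simps)
lemma orient_triv[simp]: "orient a b a = 0" "orient a b b = 0" "orient a a b = 0"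
  by (simp_all add: orient_def)

lemma orient_comb:
  assumes "s + t = 1"
  shows "orient a b (s *\<^sub>R x + t *\<^sub>R y) = s * orient a b x + t * orient a b y"
proof -
  have t: "t = 1 - s" using assms by simp
  show ?thesis unfolding orient_def t by (simp add: algebra_simps)
qed

lemma orient_seg:
  assumes "z \<in> closed_segment p q"
  obtains u where "0 \<le> u" "u \<le> 1" "z = (1 - u) *\<^sub>R p + u *\<^sub>R q"
    "orient a b z = (1 - u) * orient a b p + u * orient a b q"
proof -
  obtain u where u: "0 \<le> u" "u \<le> 1" "z = (1 - u) *\<^sub>R p + u *\<^sub>R q"
    using assms unfolding closed_segment_def by blast
  then have "orient a b z = (1 - u) * orient a b p + u * orient a b q"
    by (simp add: orient_comb)
  then show ?thesis using that u by blast
qed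

lemma orient_zero_collinear:
  assumes "orient a b c = 0"
  shows "collinear {a, b, c}"
proof -
  have eq: "collinear {a,b,c} \<longleftrightarrow> collinear {0, a - b, c - b}"
    by (rule collinear_3) simp
  show ?thesis
  proof (cases "a = b")
    case True
    then show ?thesis by (simp add: collinear_2 insert_commute)
  next
    case False
    then obtain i where i: "a$i \<noteq> b$i" by (auto simp: vec_eq_iff)
    have "i = 1 \<or> i = 2" using exhaust_2 by auto
    then have "\<exists>k. c - b = k *\<^sub>R (a - b)"
    proof
      assume "i = 1"
      define k where "k = (c$1 - b$1) / (a$1 - b$1)"
      have "c$1 - b$1 = k * (a$1 - b$1)" using i \<open>i=1\<close> by (simp add: k_def)
      moreover have "c$2 - b$2 = k * (a$2 - b$2)"
      proof -
        have o: "(c$1 - b$1) * (a$2 - b$2) = (c$2 - b$2) * (a$1 - b$1)"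
          using assms unfolding orient_def by algebra
        have "(a$1 - b$1) * (c$2 - b$2) = (a$1 - b$1) * (k * (a$2 - b$2))"
          using o i \<open>i=1\<close> \<open>c$1 - b$1 = k * (a$1 - b$1)\<close> by (simp add: algebra_simps)
        then show ?thesis using i \<open>i=1\<close> by simp
      qed
      ultimately show ?thesis by (intro exI[of _ k]) (auto simp: vec_eq_iff forall_2)
    next
      assume "i = 2"
      define k where "k = (c$2 - b$2) / (a$2 - b$2)"
      have "c$2 - b$2 = k * (a$2 - b$2)" using i \<open>i=2\<close> by (simp add: k_def)
      moreover have "c$1 - b$1 = k * (a$1 - b$1)"
      proof -
        have o: "(c$1 - b$1) * (a$2 - b$2) = (c$2 - b$2) * (a$1 - b$1)"
          using assms unfolding orient_def by algebra
        have "(a$2 - b$2) * (c$1 - b$1) = (a$2 - b$2) * (k * (a$1 - b$1))"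
          using o i \<open>i=2\<close> \<open>c$2 - b$2 = k * (a$2 - b$2)\<close> by (simp add: algebra_simps)
        then show ?thesis using i \<open>i=2\<close> by simp
      qed
      ultimately show ?thesis by (intro exI[of _ k]) (auto simp: vec_eq_iff forall_2)
    qed
    then show ?thesis unfolding eq collinear_lemma by blast
  qed
qed

lemma gp_orient:
  assumes "general_position P" "a \<in> P" "b \<in> P" "c \<in> P" "a \<noteq> b" "a \<noteq> c" "b \<noteq> c"
  shows "orient a b c \<noteq> 0"
proof -
  have "\<not> collinear {a, b, c}"
    using assms(1)[unfolded general_position_def, rule_format, OF assms(2-4)] assms(5-7) by blast
  then show ?thesis using orient_zero_collinear by blast
qed

lemma sep_strict:
  assumes "orient a b p > 0" "orient a b q > 0"
  shows "closed_segment a b \<inter> closed_segment p q = {}"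
proof (rule ccontr)
  assume "\<not> ?thesis"
  then obtain z where z1: "z \<in> closed_segment a b" and z2: "z \<in> closed_segment p q" by blast
  obtain u where "orient a b z = (1 - u) * orient a b a + u * orient a b b"
    using orient_seg[OF z1, of a b] by metis
  then have z0: "orient a b z = 0" by simp
  obtain u' where u': "0 \<le> u'" "u' \<le> 1" "orient a b z = (1 - u') * orient a b p + u' * orient a b q"
    using orient_seg[OF z2, of a b] by metis
  have "(1 - u') * orient a b p + u' * orient a b q > 0"
  proof (cases "u' = 0")
    case True then show ?thesis using assms by simp
  next
    case False
    then have "u' * orient a b q > 0" using u' assms by simp
    moreover have "(1 - u') * orient a b p \<ge> 0" using u' assms by simp
    ultimately show ?thesis by linarith
  qed
  then show False using z0 u' by simp
qed

lemma sep_top: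
  assumes "orient a c v < orient a c r" "orient a c r \<le> orient a c p" "orient a c r \<le> orient a c q"
    and "orient p q r \<noteq> 0"
  shows "closed_segment v r \<inter> closed_segment p q = {}"
proof (rule ccontr)
  assume "\<not> ?thesis"
  then obtain z where z1: "z \<in> closed_segment v r" and z2: "z \<in> closed_segment p q" by blast
  obtain u where u: "0 \<le> u" "u \<le> 1" "z = (1 - u) *\<^sub>R v + u *\<^sub>R r"
    "orient a c z = (1 - u) * orient a c v + u * orient a c r"
    using orient_seg[OF z1, of a c] by metis
  obtain u' where u': "0 \<le> u'" "u' \<le> 1" "orient a c z = (1 - u') * orient a c p + u' * orient a c q"
    using orient_seg[OF z2, of a c] by metis
  have "(1 - u') * orient a c p + u' * orient a c q \<ge> (1 - u') * orient a c r + u' * orient a c r"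
    using u' assms by (intro add_mono mult_left_mono) auto
  moreover have "(1 - u') * orient a c r + u' * orient a c r = orient a c r" by (simp add: algebra_simps)
  ultimately have "orient a c z \<ge> orient a c r" using u'(3) by linarith
  moreover have "orient a c z - orient a c r = (1 - u) * (orient a c v - orient a c r)"
    using u(4) by (simp add: algebra_simps)
  ultimately have "(1 - u) * (orient a c v - orient a c r) \<ge> 0" by linarith
  moreover have "orient a c v - orient a c r < 0" using assms by simp
  ultimately have "1 - u \<le> 0" using mult_pos_neg[of "1 - u" "orient a c v - orient a c r"] by linarith
  then have "u = 1" using u by simp
  then have "z = r" using u by simp
  obtain u'' where "orient p q z = (1 - u'') * orient p q p + u'' * orient p q q"
    using orient_seg[OF z2, of p q] by metis
  then have "orient p q z = 0" by simp
  then show False using \<open>z = r\<close> assms by simp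
qed

lemma walk_len2:
  assumes "is_walk V E ys" "hd ys = x" "last ys = y" "x \<noteq> y"
  shows "length ys \<ge> 2"
proof (rule ccontr)
  assume "\<not> ?thesis"
  moreover have "ys \<noteq> []" using assms(1) unfolding is_walk_def by blast
  moreover have "length ys \<noteq> 0" using \<open>ys \<noteq> []\<close> by simp
  ultimately have "length ys = 1" by linarith
  then obtain z where "ys = [z]" using length_Suc_conv[of ys 0] by auto
  then show False using assms by simp
qed

lemma walk_len3:
  assumes "is_walk V E ys" "hd ys = x" "last ys = y" "x \<noteq> y" "\<not> E x y"
  shows "length ys \<ge> 3"
proof (rule ccontr)
  assume "\<not> ?thesis"
  moreover have "length ys \<ge> 2" by (rule walk_len2[OF assms(1-4)])
  ultimately have l2: "length ys = 2" by simp
  have ys: "ys = [ys ! 0, ys ! 1]"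
  proof (rule nth_equalityI)
    show "length ys = length [ys ! 0, ys ! 1]" using l2 by simp
    fix i assume "i < length ys"
    then have "i = 0 \<or> i = 1" using l2 by auto
    then show "ys ! i = [ys ! 0, ys ! 1] ! i" by auto
  qed
  have "E (ys ! 0) (ys ! Suc 0)" using assms(1) l2 unfolding is_walk_def by simp
  moreover have "hd ys = ys ! 0" "last ys = ys ! 1" using ys by (metis list.sel(1), metis last_ConsL last_ConsR list.distinct(1) nth_Cons_0 nth_Cons_Suc One_nat_def)
  ultimately show False using assms by simp
qed

lemma mvs_from_witness:
  assumes "U \<subseteq> V" "\<forall>x\<in>V. x \<noteq> {}"
    and wit: "\<And>x y. x \<in> U \<Longrightarrow> y \<in> U \<Longrightarrow> x \<noteq> y \<Longrightarrow> x \<inter> y \<noteq> {} \<Longrightarrow>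
       \<exists>w\<in>V - U. x \<inter> w = {} \<and> w \<inter> y = {}"
  shows "mutual_visibility_set V D_adj U"
  unfolding mutual_visibility_set_def
proof (intro conjI ballI impI)
  show "U \<subseteq> V" by fact
  fix x y assume x: "x \<in> U" and y: "y \<in> U" and xy: "x \<noteq> y"
  show "mutually_visible V D_adj U x y"
  proof (cases "x \<inter> y = {}")
    case True
    have "is_shortest_path V D_adj x y [x, y]"
      unfolding is_shortest_path_def
    proof (intro conjI allI impI)
      show "is_walk V D_adj [x, y]" unfolding is_walk_def
      proof (intro conjI allI impI)
        show "[x, y] \<noteq> []" by simp
        show "set [x, y] \<subseteq> V" using x y assms(1) by auto
        fix i assume "Suc i < length [x, y]"
        then have "i = 0" by simp
        then show "D_adj ([x, y] ! i) ([x, y] ! Suc i)" using True by (simp add: D_adj_def)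
      qed
      fix ys assume h: "is_walk V D_adj ys \<and> hd ys = x \<and> last ys = y"
      have "length ys \<ge> 2" using walk_len2[of V D_adj ys x y] h xy by blast
      then show "length [x, y] \<le> length ys" by simp
    qed auto
    moreover have "internal_vertices [x, y] = {}" by (simp add: internal_vertices_def)
    ultimately show ?thesis unfolding mutually_visible_def by blast
  next
    case False
    then obtain w where w: "w \<in> V - U" "x \<inter> w = {}" "w \<inter> y = {}" using wit x y xy by blast
    have "is_shortest_path V D_adj x y [x, w, y]"
      unfolding is_shortest_path_def
    proof (intro conjI allI impI)
      show "is_walk V D_adj [x, w, y]" unfolding is_walk_def
      proof (intro conjI allI impI)
        show "[x, w, y] \<noteq> []" by simp
        show "set [x, w, y] \<subseteq> V" using x y w assms(1) by auto
        fix i assume "Suc i < length [x, w, y]"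
        then have "i = 0 \<or> i = 1" by auto
        then show "D_adj ([x, w, y] ! i) ([x, w, y] ! Suc i)" using w by (auto simp: D_adj_def)
      qed
      fix ys assume h: "is_walk V D_adj ys \<and> hd ys = x \<and> last ys = y"
      have "\<not> D_adj x y" using False by (simp add: D_adj_def)
      then have "length ys \<ge> 3" using walk_len3[of V D_adj ys x y] h xy by blast
      then show "length [x, w, y] \<le> length ys" by simp
    qed auto
    moreover have "internal_vertices [x, w, y] \<inter> U = {}" using w by (simp add: internal_vertices_def)
    ultimately show ?thesis unfolding mutually_visible_def by blast
  qed
qed

lemma mu_ge:
  assumes "finite V" "mutual_visibility_set V E U"
  shows "card U \<le> mu V E"
proof -
  have "{card U | U. mutual_visibility_set V E U} \<subseteq> card ` Pow V"
    unfolding mutual_visibility_set_def by auto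
  then have "finite {card U | U. mutual_visibility_set V E U}"
    using assms(1) finite_subset by blast
  then show ?thesis unfolding mu_def using assms(2) by (intro Max_ge) auto
qed

lemma D_vertices_image:
  "D_vertices P = (\<lambda>S. convex hull S) ` {S. S \<subseteq> P \<and> card S = 2}"
  unfolding D_vertices_def
proof (intro equalityI subsetI)
  fix x assume "x \<in> {closed_segment a b |a b. a \<in> P \<and> b \<in> P \<and> a \<noteq> b}"
  then obtain a b where "x = closed_segment a b" "a \<in> P" "b \<in> P" "a \<noteq> b" by blast
  then show "x \<in> (\<lambda>S. convex hull S) ` {S. S \<subseteq> P \<and> card S = 2}"
    by (intro image_eqI[of _ _ "{a,b}"]) (auto simp: segment_convex_hull)
next
  fix x assume "x \<in> (\<lambda>S. convex hull S) ` {S. S \<subseteq> P \<and> card S = 2}"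
  then obtain S where "S \<subseteq> P" "card S = 2" "x = convex hull S" by blast
  then obtain a b where "S = {a,b}" "a \<noteq> b" by (meson card_2_iff)
  then show "x \<in> {closed_segment a b |a b. a \<in> P \<and> b \<in> P \<and> a \<noteq> b}"
    using \<open>S \<subseteq> P\<close> \<open>x = convex hull S\<close> by (auto simp: segment_convex_hull)
qed

lemma card_D_vertices:
  assumes "finite P"
  shows "card (D_vertices P) = card P choose 2" "finite (D_vertices P)"
proof -
  have inj: "inj_on (\<lambda>S. convex hull S) {S. S \<subseteq> P \<and> card S = 2}"
  proof (rule inj_onI)
    fix S T assume S: "S \<in> {S. S \<subseteq> P \<and> card S = 2}" and T: "T \<in> {S. S \<subseteq> P \<and> card S = 2}"
      and eq: "convex hull S = convex hull T"
    obtain a b where "S = {a,b}" using S by (auto simp: card_2_iff)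
    moreover obtain c d where "T = {c,d}" using T by (auto simp: card_2_iff)
    ultimately show "S = T" using eq by (simp add: segment_convex_hull[symmetric])
  qed
  have fin: "finite {S. S \<subseteq> P \<and> card S = 2}" using assms by simp
  show "card (D_vertices P) = card P choose 2"
    unfolding D_vertices_image using card_image[OF inj] n_subsets[OF assms] by simp
  show "finite (D_vertices P)" unfolding D_vertices_image using fin by simp
qed

lemma mu_bound:
  assumes "finite P" "W \<subseteq> D_vertices P" "card W \<le> 9"
    and wit: "\<And>x y. x \<in> D_vertices P - W \<Longrightarrow> y \<in> D_vertices P - W \<Longrightarrow> x \<noteq> y \<Longrightarrow> x \<inter> y \<noteq> {} \<Longrightarrow>
       \<exists>w\<in>W. x \<inter> w = {} \<and> w \<inter> y = {}"
  shows "mu (D_vertices P) D_adj \<ge> (card P choose 2) - 9"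
proof -
  let ?V = "D_vertices P" let ?U = "D_vertices P - W"
  have fV: "finite ?V" using card_D_vertices assms(1) by blast
  have ne: "\<forall>x\<in>?V. x \<noteq> {}" unfolding D_vertices_def by auto
  have "mutual_visibility_set ?V D_adj ?U"
  proof (rule mvs_from_witness)
    show "?U \<subseteq> ?V" by blast
    show "\<forall>x\<in>?V. x \<noteq> {}" by fact
    fix x y assume "x \<in> ?U" "y \<in> ?U" "x \<noteq> y" "x \<inter> y \<noteq> {}"
    then obtain w where "w \<in> W" "x \<inter> w = {}" "w \<inter> y = {}" using wit by blast
    moreover have "w \<in> ?V - ?U" using \<open>w \<in> W\<close> assms(2) by blast
    ultimately show "\<exists>w\<in>?V - ?U. x \<inter> w = {} \<and> w \<inter> y = {}" by blast
  qed
  then have "card ?U \<le> mu ?V D_adj" using mu_ge fV by blast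
  moreover have "card ?U = card ?V - card W"
    using card_Diff_subset[OF finite_subset[OF assms(2) fV] assms(2)] .
  ultimately show ?thesis using card_D_vertices(1)[OF assms(1)] assms(3) by linarith
qed



definition Edge :: "(real^2) set \<Rightarrow> real^2 \<Rightarrow> real^2 \<Rightarrow> bool" where
  "Edge P a b \<longleftrightarrow> a \<in> P \<and> b \<in> P \<and> a \<noteq> b \<and> (\<forall>q\<in>P - {a, b}. orient a b q > 0)"

lemma inner2: "(u::real^2) \<bullet> x = u$1 * x$1 + u$2 * x$2"
  by (simp add: inner_vec_def sum_2)

lemma convex_orient_ge: "convex {x. orient a b x \<ge> 0}"
proof (rule convexI)
  fix x y :: "real^2" and u v :: real
  assume "x \<in> {x. orient a b x \<ge> 0}" "y \<in> {x. orient a b x \<ge> 0}" "0 \<le> u" "0 \<le> v" "u + v = 1"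
  then show "u *\<^sub>R x + v *\<^sub>R y \<in> {x. orient a b x \<ge> 0}"
    by (simp add: orient_comb)
qed

lemma orient_push:
  assumes "orient a b z = 0"
  shows "orient a b (z + t *\<^sub>R (vector [b$2 - a$2, - (b$1 - a$1)] :: real^2))
           = - t * ((b$1 - a$1)^2 + (b$2 - a$2)^2)"
  using assms unfolding orient_def by (simp add: power2_eq_square algebra_simps)

lemma edge_not_interior:
  assumes "Edge P a b" "z = a \<or> z = b"
  shows "z \<notin> interior (convex hull P)"
proof
  assume "z \<in> interior (convex hull P)"
  then obtain e where e: "e > 0" "ball z e \<subseteq> convex hull P" using mem_interior by blast
  have sub: "convex hull P \<subseteq> {x. orient a b x \<ge> 0}"
  proof (rule hull_minimal)
    show "P \<subseteq> {x. orient a b x \<ge> 0}"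
    proof
      fix q assume "q \<in> P"
      then show "q \<in> {x. orient a b x \<ge> 0}" using assms(1) unfolding Edge_def
        by (cases "q = a \<or> q = b") (auto intro: less_imp_le)
    qed
  qed (rule convex_orient_ge)
  define w :: "real^2" where "w = vector [b$2 - a$2, - (b$1 - a$1)]"
  define t where "t = e / (2 * (norm w + 1))"
  have nw: "norm w + 1 > 0" using norm_ge_zero[of w] by linarith
  have t: "t > 0" using e nw by (simp add: t_def)
  have "norm (t *\<^sub>R w) = t * norm w" using t by simp
  also have "\<dots> < e"
  proof -
    have "t * norm w < t * (norm w + 1)" using t by simp
    also have "\<dots> = e / 2" unfolding t_def using nw by (simp add: field_simps)
    finally show ?thesis using e by simp
  qed
  finally have "z + t *\<^sub>R w \<in> ball z e" by (simp add: dist_norm)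
  then have "orient a b (z + t *\<^sub>R w) \<ge> 0" using e sub by blast
  moreover have "orient a b z = 0" using assms(2) by auto
  ultimately have "- t * ((b$1 - a$1)^2 + (b$2 - a$2)^2) \<ge> 0"
    using orient_push unfolding w_def by metis
  then have "(b$1 - a$1)^2 + (b$2 - a$2)^2 \<le> 0" using t by (simp add: mult_le_0_iff)
  then have s1: "(b$1 - a$1)^2 = 0" "(b$2 - a$2)^2 = 0"
    using zero_le_power2[of "b$1 - a$1"] zero_le_power2[of "b$2 - a$2"] by linarith+
  then have "b$1 = a$1" "b$2 = a$2" by simp_all
  then have "a = b" by (auto simp: vec_eq_iff forall_2)
  then show False using assms(1) unfolding Edge_def by blast
qed

lemma edge_frontier:
  assumes "Edge P a b"
  shows "a \<in> frontier (convex hull P)" "b \<in> frontier (convex hull P)"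
proof -
  have "a \<in> closure (convex hull P)" "b \<in> closure (convex hull P)"
    using assms unfolding Edge_def by (meson closure_subset hull_inc subsetD)+
  then show "a \<in> frontier (convex hull P)" "b \<in> frontier (convex hull P)"
    using edge_not_interior[OF assms] unfolding frontier_def by auto
qed

lemma frontier_support:
  assumes "finite P" "general_position P" "card P \<ge> 3" "a \<in> P" "a \<in> frontier (convex hull P)"
  shows "\<exists>u. u \<noteq> 0 \<and> (\<forall>q\<in>P. u \<bullet> q \<le> u \<bullet> a)"
proof -
  obtain S where S: "S \<subseteq> P" "card S = 3" using obtain_subset_with_card_n assms(3) by metis
  then obtain x y z where xyz: "S = {x,y,z}" "x \<noteq> y" "y \<noteq> z" "x \<noteq> z" by (auto simp: card_3_iff)
  have "\<not> collinear S" using assms(2) S xyz unfolding general_position_def by auto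
  then have "\<not> collinear P" using S collinear_subset by blast
  then have "\<not> aff_dim P \<le> 1" using collinear_aff_dim by blast
  then have "aff_dim P > 1" by simp
  moreover have "aff_dim P \<le> 2" using aff_dim_le_DIM[of P] by simp
  ultimately have "aff_dim (convex hull P) = int DIM(real^2)" by (simp add: aff_dim_convex_hull)
  then have "affine hull (convex hull P) = UNIV" using aff_dim_eq_full by blast
  then have ri: "rel_interior (convex hull P) = interior (convex hull P)" by (rule rel_interior_interior)
  have "a \<in> closure (convex hull P)" "a \<notin> rel_interior (convex hull P)"
    using assms(5) ri unfolding frontier_def by auto
  then obtain w where w: "w \<noteq> 0" "\<And>y. y \<in> closure (convex hull P) \<Longrightarrow> w \<bullet> a \<le> w \<bullet> y"
    using supporting_hyperplane_relative_frontier[OF convex_convex_hull] by metis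
  have "\<forall>q\<in>P. (- w) \<bullet> q \<le> (- w) \<bullet> a"
  proof
    fix q assume "q \<in> P"
    then have "q \<in> closure (convex hull P)" by (meson closure_subset hull_inc subsetD)
    then show "(- w) \<bullet> q \<le> (- w) \<bullet> a" using w by simp
  qed
  then show ?thesis using w by (intro exI[of _ "- w"]) simp
qed

lemma orient_ident:
  "orient a p q * (u \<bullet> (s - a)) + orient a q s * (u \<bullet> (p - a)) + orient a s p * (u \<bullet> (q - a)) = 0"
  unfolding orient_def inner2 by (simp add: algebra_simps)

lemma perp_orient:
  assumes "u \<bullet> (p - a) = 0" "u \<bullet> (q - a) = 0" "u \<noteq> 0"
  shows "orient a p q = 0"
proof -
  have h1: "u$1 * (p$1 - a$1) + u$2 * (p$2 - a$2) = 0" using assms(1) unfolding inner2 by simp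
  have h2: "u$1 * (q$1 - a$1) + u$2 * (q$2 - a$2) = 0" using assms(2) unfolding inner2 by simp
  have "orient a p q * u$1 = 0" using h1 h2 unfolding orient_def by algebra
  moreover have "orient a p q * u$2 = 0" using h1 h2 unfolding orient_def by algebra
  moreover have "u$1 \<noteq> 0 \<or> u$2 \<noteq> 0" using assms(3) by (auto simp: vec_eq_iff forall_2)
  ultimately show ?thesis by auto
qed

lemma orient_trans:
  assumes "u \<noteq> 0" "u \<bullet> (p - a) \<le> 0" "u \<bullet> (q - a) \<le> 0" "u \<bullet> (s - a) \<le> 0"
    "orient a p q > 0" "orient a q s > 0" "orient a p s \<noteq> 0"
  shows "orient a p s > 0"
proof (rule ccontr)
  assume "\<not> ?thesis"
  then have sp: "orient a s p > 0" using assms(7) orient_swap[of a s p] by linarith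
  have t1: "orient a p q * (u \<bullet> (s - a)) \<le> 0" using assms by (simp add: mult_nonneg_nonpos)
  have t2: "orient a q s * (u \<bullet> (p - a)) \<le> 0" using assms by (simp add: mult_nonneg_nonpos)
  have t3: "orient a s p * (u \<bullet> (q - a)) \<le> 0" using assms sp by (simp add: mult_nonneg_nonpos)
  have "orient a q s * (u \<bullet> (p - a)) = 0" "orient a s p * (u \<bullet> (q - a)) = 0"
    using orient_ident[of a p q u s] t1 t2 t3 by linarith+
  then have "u \<bullet> (p - a) = 0" "u \<bullet> (q - a) = 0" using assms sp by auto
  then have "orient a p q = 0" using perp_orient assms(1) by blast
  then show False using assms(5) by simp
qed

lemma next_exists:
  assumes "finite P" "general_position P" "a \<in> P" "card P \<ge> 2" "u \<noteq> 0" "\<forall>q\<in>P. u \<bullet> q \<le> u \<bullet> a"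
  shows "\<exists>b. Edge P a b"
proof -
  define Q where "Q = P - {a}"
  have fQ: "finite Q" using assms(1) by (simp add: Q_def)
  have "card Q \<ge> 1" using assms(3,4) by (simp add: Q_def)
  then have Qne: "Q \<noteq> {}" by auto
  have uQ: "u \<bullet> (x - a) \<le> 0" if "x \<in> P" for x using assms(6) that by (simp add: inner_diff_right)
  define pred where "pred c = {q \<in> Q. orient a q c > 0}" for c
  define m where "m = Min ((\<lambda>c. card (pred c)) ` Q)"
  have "m \<in> (\<lambda>c. card (pred c)) ` Q" unfolding m_def using fQ Qne by (intro Min_in) auto
  then obtain b where b: "b \<in> Q" "card (pred b) = m" by auto
  have bmin: "card (pred b) \<le> card (pred c)" if "c \<in> Q" for c
    using b Min_le[of "(\<lambda>c. card (pred c)) ` Q"] fQ that unfolding m_def by auto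
  have "Edge P a b" unfolding Edge_def
  proof (intro conjI ballI)
    show "a \<in> P" "b \<in> P" "a \<noteq> b" using assms(3) b by (auto simp: Q_def)
    fix q assume q: "q \<in> P - {a, b}"
    show "orient a b q > 0"
    proof (rule ccontr)
      assume "\<not> ?thesis"
      moreover have "orient a b q \<noteq> 0" using gp_orient[OF assms(2)] q b assms(3) by (auto simp: Q_def)
      ultimately have "orient a q b > 0" using orient_swap[of a q b] by linarith
      then have qb: "q \<in> pred b" using q by (auto simp: pred_def Q_def)
      have "pred q \<subseteq> pred b - {q}"
      proof
        fix s assume s: "s \<in> pred q"
        then have s1: "s \<in> Q" "orient a s q > 0" by (auto simp: pred_def)
        have "s \<noteq> q" using s1 by auto
        have "s \<noteq> b" using s1 \<open>\<not> orient a b q > 0\<close> by auto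
        have "orient a s b \<noteq> 0" using gp_orient[OF assms(2)] s1 b \<open>s \<noteq> b\<close> assms(3) by (auto simp: Q_def)
        then have "orient a s b > 0"
          using orient_trans[OF assms(5) _ _ _ s1(2) \<open>orient a q b > 0\<close>] uQ s1 q b by (auto simp: Q_def)
        then show "s \<in> pred b - {q}" using s1 \<open>s \<noteq> q\<close> by (auto simp: pred_def)
      qed
      then have "pred q \<subset> pred b" using qb by blast
      then have "card (pred q) < card (pred b)"
        using fQ by (intro psubset_card_mono) (auto simp: pred_def)
      moreover have "q \<in> Q" using q by (auto simp: Q_def)
      ultimately show False using bmin by fastforce
    qed
  qed
  then show ?thesis by blast
qed

lemma edge_unique: "Edge P a b \<Longrightarrow> Edge P a c \<Longrightarrow> b = c"
proof (rule ccontr)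
  assume e: "Edge P a b" "Edge P a c" "b \<noteq> c"
  then have "orient a b c > 0" "orient a c b > 0" unfolding Edge_def by auto
  then show False using orient_swap[of a b c] by simp
qed

lemma edge_inj: "Edge P a b \<Longrightarrow> Edge P c b \<Longrightarrow> a = c"
proof (rule ccontr)
  assume e: "Edge P a b" "Edge P c b" "a \<noteq> c"
  then have "orient a b c > 0" "orient c b a > 0" unfolding Edge_def by auto
  moreover have "orient c b a = - orient a b c"
    using orient_cyc[of c b a] orient_swap[of a b c] orient_cyc[of b a c] by simp
  ultimately show False by simp
qed

lemma edge_no2:
  assumes "Edge P a b" "Edge P b a" "q \<in> P - {a, b}"
  shows False
proof -
  have "orient a b q > 0" "orient b a q > 0" using assms unfolding Edge_def by auto
  moreover have "orient b a q = - orient a b q"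
    using orient_cyc[of b a q] orient_swap[of a b q] by simp
  ultimately show False by simp
qed




lemma pentagon:
  assumes fin: "finite P" and gp: "general_position P" and cP: "card P \<ge> 5"
    and cH: "card (P \<inter> frontier (convex hull P)) = 5"
  shows "\<exists>v1 v2 v3 v4 v5. distinct [v1, v2, v3, v4, v5] \<and> Edge P v1 v2 \<and> Edge P v2 v3 \<and>
           Edge P v3 v4 \<and> Edge P v4 v5 \<and> Edge P v5 v1"
proof -
  define H where "H = P \<inter> frontier (convex hull P)"
  have fH: "finite H" using fin by (simp add: H_def)
  have cH': "card H = 5" using cH by (simp add: H_def)
  have ex: "\<exists>b. Edge P a b" if "a \<in> H" for a
  proof -
    have aP: "a \<in> P" "a \<in> frontier (convex hull P)" using that by (auto simp: H_def)
    have "card P \<ge> 3" using cP by linarith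
    then obtain u where "u \<noteq> 0" "\<forall>q\<in>P. u \<bullet> q \<le> u \<bullet> a"
      using frontier_support[OF fin gp _ aP(1) aP(2)] by blast
    then show ?thesis using next_exists[OF fin gp] that cP by (auto simp: H_def)
  qed
  have inH: "b \<in> H" if "Edge P a b" for a b
    using edge_frontier[OF that] that unfolding Edge_def H_def by blast
  have inH': "a \<in> H" if "Edge P a b" for a b
    using edge_frontier[OF that] that unfolding Edge_def H_def by blast
  define nx where "nx a = (SOME b. Edge P a b)" for a
  have enx: "Edge P a (nx a)" if "a \<in> H" for a
    using someI_ex[OF ex[OF that]] unfolding nx_def .
  have third: "\<exists>q. q \<in> P - {a, b}" for a b
  proof -
    have "card (P - {a, b}) \<ge> card P - card {a, b}" by (rule diff_card_le_card_Diff) simp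
    moreover have "card {a, b} \<le> 2" by (simp add: card_insert_if)
    ultimately have "card (P - {a, b}) > 0" using cP by linarith
    then show ?thesis by (metis card_0_eq card_gt_0_iff ex_in_conv fin finite_Diff)
  qed
  have no2: False if "Edge P a b" "Edge P b a" for a b
    using third[of a b] edge_no2[OF that] by blast
  obtain v1 where v1: "v1 \<in> H" using cH' by fastforce
  define v2 where "v2 = nx v1"
  define v3 where "v3 = nx v2"
  define v4 where "v4 = nx v3"
  define v5 where "v5 = nx v4"
  define v6 where "v6 = nx v5"
  have e12: "Edge P v1 v2" using enx v1 v2_def by blast
  have h2: "v2 \<in> H" using inH e12 by blast
  have e23: "Edge P v2 v3" using enx h2 v3_def by blast
  have h3: "v3 \<in> H" using inH e23 by blast
  have e34: "Edge P v3 v4" using enx h3 v4_def by blast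
  have h4: "v4 \<in> H" using inH e34 by blast
  have e45: "Edge P v4 v5" using enx h4 v5_def by blast
  have h5: "v5 \<in> H" using inH e45 by blast
  have e56: "Edge P v5 v6" using enx h5 v6_def by blast
  have h6: "v6 \<in> H" using inH e56 by blast
  have ne: "a \<noteq> b" if "Edge P a b" for a b using that unfolding Edge_def by blast
  have d12: "v1 \<noteq> v2" "v2 \<noteq> v3" "v3 \<noteq> v4" "v4 \<noteq> v5" "v5 \<noteq> v6"
    using ne e12 e23 e34 e45 e56 by blast+
  have d13: "v1 \<noteq> v3" "v2 \<noteq> v4" "v3 \<noteq> v5"
    using no2 e12 e23 e34 e45 by blast+
  have d14: "v1 \<noteq> v4"
  proof
    assume eq: "v1 = v4"
    have "card (H - {v1, v2, v3}) = 2"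
      using cH' v1 h2 h3 d12 d13 by (simp add: card_Diff_subset card_insert_if)
    then obtain a b where ab: "H - {v1, v2, v3} = {a, b}" "a \<noteq> b" by (auto simp: card_2_iff)
    have aH: "a \<in> H" "b \<in> H" and anot: "a \<notin> {v1, v2, v3}" "b \<notin> {v1, v2, v3}" using ab by auto
    have ea: "Edge P a (nx a)" by (rule enx[OF aH(1)])
    have eb: "Edge P b (nx b)" by (rule enx[OF aH(2)])
    have nxa: "nx a = b"
    proof -
      have "nx a \<in> H" by (rule inH[OF ea])
      moreover have "nx a \<noteq> a" using ne[OF ea] by simp
      moreover have "nx a \<noteq> v1"
      proof
        assume "nx a = v1" then have "Edge P a v4" using ea eq by simp
        then have "a = v3" by (rule edge_inj[OF _ e34])
        then show False using anot by simp
      qed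
      moreover have "nx a \<noteq> v2"
      proof
        assume "nx a = v2" then have "Edge P a v2" using ea by simp
        then have "a = v1" by (rule edge_inj[OF _ e12])
        then show False using anot by simp
      qed
      moreover have "nx a \<noteq> v3"
      proof
        assume "nx a = v3" then have "Edge P a v3" using ea by simp
        then have "a = v2" by (rule edge_inj[OF _ e23])
        then show False using anot by simp
      qed
      ultimately show ?thesis using ab by blast
    qed
    have nxb: "nx b = a"
    proof -
      have "nx b \<in> H" by (rule inH[OF eb])
      moreover have "nx b \<noteq> b" using ne[OF eb] by simp
      moreover have "nx b \<noteq> v1"
      proof
        assume "nx b = v1" then have "Edge P b v4" using eb eq by simp
        then have "b = v3" by (rule edge_inj[OF _ e34])
        then show False using anot by simp
      qed
      moreover have "nx b \<noteq> v2"
      proof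
        assume "nx b = v2" then have "Edge P b v2" using eb by simp
        then have "b = v1" by (rule edge_inj[OF _ e12])
        then show False using anot by simp
      qed
      moreover have "nx b \<noteq> v3"
      proof
        assume "nx b = v3" then have "Edge P b v3" using eb by simp
        then have "b = v2" by (rule edge_inj[OF _ e23])
        then show False using anot by simp
      qed
      ultimately show ?thesis using ab by blast
    qed
    show False using no2[of a b] ea eb nxa nxb by simp
  qed
  have d25: "v2 \<noteq> v5"
  proof
    assume "v2 = v5" then have "Edge P v1 v5" using e12 by simp
    then have "v4 = v1" by (rule edge_inj[OF e45])
    then show False using d14 by simp
  qed
  have d15: "v1 \<noteq> v5"
  proof
    assume eq: "v1 = v5"
    have "card (H - {v1, v2, v3, v4}) = 1"
      using cH' v1 h2 h3 h4 d12 d13 d14 by (simp add: card_Diff_subset card_insert_if)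
    then obtain a where a: "H - {v1, v2, v3, v4} = {a}" by (auto simp: card_1_singleton_iff)
    have aH: "a \<in> H" and anot: "a \<notin> {v1, v2, v3, v4}" using a by auto
    have ea: "Edge P a (nx a)" by (rule enx[OF aH])
    have "nx a \<in> H" by (rule inH[OF ea])
    moreover have "nx a \<noteq> a" using ne[OF ea] by simp
    moreover have "nx a \<noteq> v1"
    proof
      assume "nx a = v1" then have "Edge P a v5" using ea eq by simp
      then have "a = v4" by (rule edge_inj[OF _ e45])
      then show False using anot by simp
    qed
    moreover have "nx a \<noteq> v2"
    proof
      assume "nx a = v2" then have "Edge P a v2" using ea by simp
      then have "a = v1" by (rule edge_inj[OF _ e12])
      then show False using anot by simp
    qed
    moreover have "nx a \<noteq> v3"
    proof
      assume "nx a = v3" then have "Edge P a v3" using ea by simp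
      then have "a = v2" by (rule edge_inj[OF _ e23])
      then show False using anot by simp
    qed
    moreover have "nx a \<noteq> v4"
    proof
      assume "nx a = v4" then have "Edge P a v4" using ea by simp
      then have "a = v3" by (rule edge_inj[OF _ e34])
      then show False using anot by simp
    qed
    ultimately show False using a by blast
  qed
  have Hv: "H = {v1, v2, v3, v4, v5}"
  proof -
    have "{v1, v2, v3, v4, v5} \<subseteq> H" using v1 h2 h3 h4 h5 by auto
    moreover have "card {v1, v2, v3, v4, v5} = 5"
      using d12 d13 d14 d25 d15 by (simp add: card_insert_if)
    ultimately show ?thesis using cH' fH by (metis card_subset_eq)
  qed
  have "v6 = v1"
  proof -
    have "v6 \<noteq> v2"
    proof
      assume "v6 = v2" then have "Edge P v5 v2" using e56 by simp
      then have "v5 = v1" by (rule edge_inj[OF _ e12])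
      then show False using d15 by simp
    qed
    moreover have "v6 \<noteq> v3"
    proof
      assume "v6 = v3" then have "Edge P v5 v3" using e56 by simp
      then have "v5 = v2" by (rule edge_inj[OF _ e23])
      then show False using d25 by simp
    qed
    moreover have "v6 \<noteq> v4"
    proof
      assume "v6 = v4" then have "Edge P v5 v4" using e56 by simp
      then have "v5 = v3" by (rule edge_inj[OF _ e34])
      then show False using d13 by simp
    qed
    ultimately show ?thesis using h6 Hv d12 by auto
  qed
  then have "Edge P v5 v1" using e56 by simp
  moreover have "distinct [v1, v2, v3, v4, v5]" using d12 d13 d14 d25 d15 by auto
  ultimately have "distinct [v1, v2, v3, v4, v5] \<and> Edge P v1 v2 \<and> Edge P v2 v3 \<and>
           Edge P v3 v4 \<and> Edge P v4 v5 \<and> Edge P v5 v1" using e12 e23 e34 e45 by simp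
  then show ?thesis by (intro exI)
qed



definition pent :: "(real^2) set \<Rightarrow> real^2 \<Rightarrow> real^2 \<Rightarrow> real^2 \<Rightarrow> real^2 \<Rightarrow> real^2 \<Rightarrow> bool" where
  "pent P v1 v2 v3 v4 v5 \<longleftrightarrow> distinct [v1, v2, v3, v4, v5] \<and> Edge P v1 v2 \<and> Edge P v2 v3 \<and>
     Edge P v3 v4 \<and> Edge P v4 v5 \<and> Edge P v5 v1"

lemma pent_rot: "pent P v1 v2 v3 v4 v5 \<Longrightarrow> pent P v2 v3 v4 v5 v1"
  unfolding pent_def by auto

definition eartop :: "(real^2) set \<Rightarrow> real^2 \<Rightarrow> real^2 \<Rightarrow> real^2 \<Rightarrow> real^2 \<Rightarrow> bool" where
  "eartop P a v c r \<longleftrightarrow> r \<in> P \<and> r \<noteq> v \<and> orient a c r < 0 \<and> (\<forall>p\<in>P - {v}. orient a c r \<le> orient a c p)"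

definition sepP :: "(real^2) set \<Rightarrow> real^2 \<Rightarrow> real^2 \<Rightarrow> bool" where
  "sepP P a b \<longleftrightarrow> a \<in> P \<and> b \<in> P \<and> a \<noteq> b \<and>
     (\<forall>p\<in>P - {a, b}. \<forall>q\<in>P - {a, b}. closed_segment a b \<inter> closed_segment p q = {})"

lemma orient_sum: "orient a b p + orient b c p + orient c a p = orient a b c"
  unfolding orient_def by (simp add: algebra_simps)

lemma edge_pos: "Edge P a b \<Longrightarrow> q \<in> P \<Longrightarrow> q \<noteq> a \<Longrightarrow> q \<noteq> b \<Longrightarrow> orient a b q > 0"
  unfolding Edge_def by auto

lemma edge_sepP: "Edge P a b \<Longrightarrow> sepP P a b"
  unfolding sepP_def using sep_strict edge_pos unfolding Edge_def by (metis DiffE insertCI)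

lemma pent_mem: "pent P v1 v2 v3 v4 v5 \<Longrightarrow> v1 \<in> P \<and> v2 \<in> P \<and> v3 \<in> P \<and> v4 \<in> P \<and> v5 \<in> P"
  unfolding pent_def Edge_def by auto

lemma ear_min:
  assumes "pent P v1 v2 v3 v4 v5" "p \<in> P" "p \<noteq> v2"
  shows "orient v1 v3 v2 < orient v1 v3 p"
proof -
  have d: "distinct [v1, v2, v3, v4, v5]" and e12: "Edge P v1 v2" and e23: "Edge P v2 v3"
    using assms(1) unfolding pent_def by auto
  have mem: "v3 \<in> P" using pent_mem[OF assms(1)] by auto
  have o123: "orient v1 v2 v3 > 0" using edge_pos[OF e12 mem] d by auto
  have s: "orient v1 v3 v2 = - orient v1 v2 v3" using orient_swap[of v1 v3 v2] by simp
  show ?thesis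
  proof (cases "p = v1 \<or> p = v3")
    case True
    then show ?thesis using o123 s by auto
  next
    case False
    then have "orient v1 v2 p > 0" "orient v2 v3 p > 0"
      using edge_pos[OF e12 assms(2)] edge_pos[OF e23 assms(2)] assms(3) by auto
    moreover have "orient v3 v1 p = - orient v1 v3 p"
      using orient_cyc[of v3 v1 p] orient_swap[of v1 v3 p] by simp
    ultimately show ?thesis using orient_sum[of v1 v2 p v3] s by linarith
  qed
qed

lemma eartop_not_vertex:
  assumes "pent P v1 v2 v3 v4 v5" "eartop P v1 v2 v3 r"
  shows "r \<notin> {v1, v2, v3, v4, v5}"
proof -
  have d: "distinct [v1, v2, v3, v4, v5]" and e34: "Edge P v3 v4" and e51: "Edge P v5 v1"
    using assms(1) unfolding pent_def by auto
  have mem: "v1 \<in> P" "v3 \<in> P" using pent_mem[OF assms(1)] by auto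
  have "orient v3 v4 v1 > 0" using edge_pos[OF e34 mem(1)] d by auto
  then have o4: "orient v1 v3 v4 > 0" using orient_cyc[of v1 v3 v4] by simp
  have "orient v5 v1 v3 > 0" using edge_pos[OF e51 mem(2)] d by auto
  then have o5: "orient v1 v3 v5 > 0" using orient_cyc[of v5 v1 v3] orient_cyc[of v1 v3 v5] by simp
  have "orient v1 v3 r < 0" "r \<noteq> v2" using assms(2) unfolding eartop_def by auto
  then show ?thesis using o4 o5 by auto
qed

lemma eartop_sepP:
  assumes "general_position P" "pent P v1 v2 v3 v4 v5" "eartop P v1 v2 v3 r"
  shows "sepP P v2 r"
proof -
  have rP: "r \<in> P" "r \<noteq> v2" and rmin: "\<forall>p\<in>P - {v2}. orient v1 v3 r \<le> orient v1 v3 p"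
    using assms(3) unfolding eartop_def by auto
  have v2: "v2 \<in> P" using pent_mem[OF assms(2)] by auto
  have lt: "orient v1 v3 v2 < orient v1 v3 r" using ear_min[OF assms(2) rP(1) rP(2)] .
  show ?thesis unfolding sepP_def
  proof (intro conjI ballI)
    show "v2 \<in> P" "r \<in> P" "v2 \<noteq> r" using v2 rP by auto
    fix p q assume p: "p \<in> P - {v2, r}" and q: "q \<in> P - {v2, r}"
    show "closed_segment v2 r \<inter> closed_segment p q = {}"
    proof (cases "p = q")
      case True
      then have "closed_segment p q = {p}" by simp
      moreover have "p \<notin> closed_segment v2 r"
      proof
        assume "p \<in> closed_segment v2 r"
        then obtain u where "orient v2 r p = (1 - u) * orient v2 r v2 + u * orient v2 r r"
          using orient_seg by metis
        then have "orient v2 r p = 0" by simp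
        moreover have "orient v2 r p \<noteq> 0" using gp_orient[OF assms(1)] p v2 rP by auto
        ultimately show False by simp
      qed
      ultimately show ?thesis by auto
    next
      case False
      have "orient p q r \<noteq> 0" using gp_orient[OF assms(1)] p q rP False by auto
      then show ?thesis using sep_top[OF lt] rmin p q by auto
    qed
  qed
qed

lemma cross_ident:
  "orient c d e * orient c a p = orient c p e * orient c a d + orient c d p * orient c a e"
  unfolding orient_def by (simp add: algebra_simps)

lemma tops_distinct:
  assumes "pent P v1 v2 v3 v4 v5" "eartop P v1 v2 v3 r" "eartop P v3 v4 v5 r'"
  shows "r \<noteq> r'"
proof
  assume eq: "r = r'"
  have d: "distinct [v1, v2, v3, v4, v5]" and e34: "Edge P v3 v4" and e51: "Edge P v5 v1"
    using assms(1) unfolding pent_def by auto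
  have mem: "v1 \<in> P" "v3 \<in> P" "v5 \<in> P" using pent_mem[OF assms(1)] by auto
  have rP: "r \<in> P" using assms(2) unfolding eartop_def by auto
  have rn: "r \<notin> {v1, v2, v3, v4, v5}" using eartop_not_vertex[OF assms(1,2)] .
  have a1: "orient v1 v3 r < 0" using assms(2) unfolding eartop_def by auto
  have a2: "orient v3 v5 r < 0" using assms(3) eq unfolding eartop_def by auto
  have a3: "orient v3 v4 r > 0" using edge_pos[OF e34 rP] rn by auto
  have b1: "orient v3 v4 v5 > 0" using edge_pos[OF e34 mem(3)] d by auto
  have b2: "orient v3 v4 v1 > 0" using edge_pos[OF e34 mem(1)] d by auto
  have b3: "orient v5 v1 v3 > 0" using edge_pos[OF e51 mem(2)] d by auto
  have c1: "orient v3 v1 r > 0" using a1 orient_cyc[of v3 v1 r] orient_swap[of v1 v3 r] by simp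
  have c2: "orient v3 r v5 > 0" using a2 orient_swap[of v3 r v5] by simp
  have c3: "orient v3 v1 v4 < 0" using b2 orient_swap[of v3 v1 v4] by simp
  have c4: "orient v3 v1 v5 < 0"
    using b3 orient_swap[of v3 v1 v5] orient_cyc[of v3 v5 v1] orient_cyc[of v5 v1 v3] by simp
  have "orient v3 v4 v5 * orient v3 v1 r > 0" using b1 c1 by simp
  moreover have "orient v3 r v5 * orient v3 v1 v4 < 0" using c2 c3 by (simp add: mult_pos_neg)
  moreover have "orient v3 v4 r * orient v3 v1 v5 < 0" using a3 c4 by (simp add: mult_pos_neg)
  ultimately show False using cross_ident[of v3 v4 v5 v1 r] by linarith
qed

lemma eartop_exists:
  assumes "finite P" "p0 \<in> P - {v}" "orient a c p0 < 0"
  shows "\<exists>r. eartop P a v c r"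
proof -
  define S where "S = P - {v}"
  have fS: "finite S" "S \<noteq> {}" using assms(1,2) by (auto simp: S_def)
  define m where "m = Min (orient a c ` S)"
  have "m \<in> orient a c ` S" unfolding m_def using fS by (intro Min_in) auto
  then obtain r where r: "r \<in> S" "orient a c r = m" by auto
  have le: "m \<le> orient a c p" if "p \<in> S" for p unfolding m_def using fS that by (intro Min_le) auto
  have "m < 0" using le[of p0] assms(2,3) by (auto simp: S_def)
  then have "eartop P a v c r" unfolding eartop_def using r le by (auto simp: S_def)
  then show ?thesis by blast
qed

lemma ear_cases:
  assumes "finite P" "general_position P" "pent P v1 v2 v3 v4 v5"
  shows "(\<forall>p\<in>P - {v1, v2, v3}. orient v1 v3 p > 0) \<or> (\<exists>r. eartop P v1 v2 v3 r)"
proof (cases "\<exists>p0\<in>P - {v2}. orient v1 v3 p0 < 0")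
  case True
  then show ?thesis using eartop_exists[OF assms(1)] by blast
next
  case False
  have "orient v1 v3 p > 0" if "p \<in> P - {v1, v2, v3}" for p
  proof -
    have "orient v1 v3 p \<noteq> 0"
      using gp_orient[OF assms(2)] that pent_mem[OF assms(3)] assms(3) unfolding pent_def by auto
    moreover have "\<not> orient v1 v3 p < 0" using False that by auto
    ultimately show ?thesis by linarith
  qed
  then show ?thesis by blast
qed



lemma comb_tops:
  fixes v1 v2 v3 v4 v5 r1 r2 r3 r4 r5 p q p' q' :: 'a
  assumes "distinct [v1, v2, v3, v4, v5]"
    and "r1 \<notin> {v5, v1, v2, v3, v4}" "r2 \<notin> {v1, v2, v3, v4, v5}" "r3 \<notin> {v2, v3, v4, v5, v1}"
        "r4 \<notin> {v3, v4, v5, v1, v2}" "r5 \<notin> {v4, v5, v1, v2, v3}"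
    and "r1 \<noteq> r2" "r1 \<noteq> r3" "r2 \<noteq> r4" "r3 \<noteq> r5" "r4 \<noteq> r1" "r5 \<noteq> r2"
  shows "\<exists>(a, b)\<in>set [(v2,v3),(v3,v4),(v4,v5),(v5,v1),(v1,r1),(v2,r2),(v3,r3),(v4,r4),(v5,r5)].
           a \<notin> {p, q, p', q'} \<and> b \<notin> {p, q, p', q'}"
  using assms by simp smt

lemma comb_empty:
  fixes v1 v2 v3 v4 v5 p q p' q' :: 'a
  assumes "distinct [v1, v2, v3, v4, v5]" "p \<noteq> q" "p' \<noteq> q'" "{p, q} \<noteq> {p', q'}"
    and "\<forall>(a, b)\<in>set [(v1,v2),(v2,v3),(v3,v4),(v4,v5),(v5,v1),(v1,v4),(v2,v4),(v2,v5),(v3,v5)].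
          {p, q} \<noteq> {a, b} \<and> {p', q'} \<noteq> {a, b}"
  shows "(\<exists>(a, b)\<in>set [(v1,v2),(v2,v3),(v3,v4),(v4,v5),(v5,v1)]. a \<notin> {p, q, p', q'} \<and> b \<notin> {p, q, p', q'})
     \<or> ({p, q} = {v1, v3} \<and> p' \<notin> {v1, v2, v3} \<and> q' \<notin> {v1, v2, v3})
     \<or> ({p', q'} = {v1, v3} \<and> p \<notin> {v1, v2, v3} \<and> q \<notin> {v1, v2, v3})"
  using assms by (simp add: doubleton_eq_iff) smt

lemma D_vertices_elim:
  assumes "x \<in> D_vertices P"
  obtains p q where "x = closed_segment p q" "p \<in> P" "q \<in> P" "p \<noteq> q"
  using assms unfolding D_vertices_def by blast

lemma witness_from_sepP:
  assumes "sepP P a b" "p \<in> P" "q \<in> P" "a \<notin> {p, q}" "b \<notin> {p, q}"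
  shows "closed_segment p q \<inter> closed_segment a b = {}"
  using assms unfolding sepP_def by blast

lemma core_tops:
  assumes fin: "finite P" and gp: "general_position P" and pe: "pent P v1 v2 v3 v4 v5"
    and t1: "eartop P v5 v1 v2 r1" and t2: "eartop P v1 v2 v3 r2" and t3: "eartop P v2 v3 v4 r3"
    and t4: "eartop P v3 v4 v5 r4" and t5: "eartop P v4 v5 v1 r5" and r12: "r1 \<noteq> r2"
  shows "mu (D_vertices P) D_adj \<ge> (card P choose 2) - 9"
proof -
  have pe2: "pent P v2 v3 v4 v5 v1" using pent_rot[OF pe] .
  have pe3: "pent P v3 v4 v5 v1 v2" using pent_rot[OF pe2] .
  have pe4: "pent P v4 v5 v1 v2 v3" using pent_rot[OF pe3] .
  have pe5: "pent P v5 v1 v2 v3 v4" using pent_rot[OF pe4] .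
  define Wl where "Wl = [(v2,v3),(v3,v4),(v4,v5),(v5,v1),(v1,r1),(v2,r2),(v3,r3),(v4,r4),(v5,r5)]"
  have ed: "Edge P v2 v3" "Edge P v3 v4" "Edge P v4 v5" "Edge P v5 v1" using pe unfolding pent_def by auto
  have sepall: "\<forall>(a,b)\<in>set Wl. sepP P a b"
    using edge_sepP[OF ed(1)] edge_sepP[OF ed(2)] edge_sepP[OF ed(3)] edge_sepP[OF ed(4)]
      eartop_sepP[OF gp pe5 t1] eartop_sepP[OF gp pe t2] eartop_sepP[OF gp pe2 t3] eartop_sepP[OF gp pe3 t4]
      eartop_sepP[OF gp pe4 t5]
    unfolding Wl_def by auto
  have dv: "distinct [v1, v2, v3, v4, v5]" using pe unfolding pent_def by simp
  have comb: "\<exists>(a, b)\<in>set Wl. a \<notin> {p, q, p', q'} \<and> b \<notin> {p, q, p', q'}" for p q p' q'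
    unfolding Wl_def
    by (rule comb_tops[OF dv eartop_not_vertex[OF pe5 t1] eartop_not_vertex[OF pe t2]
          eartop_not_vertex[OF pe2 t3] eartop_not_vertex[OF pe3 t4] eartop_not_vertex[OF pe4 t5]
          r12 tops_distinct[OF pe5 t1 t3] tops_distinct[OF pe t2 t4] tops_distinct[OF pe2 t3 t5]
          tops_distinct[OF pe3 t4 t1] tops_distinct[OF pe4 t5 t2]])
  define W where "W = (\<lambda>(a, b). closed_segment a b) ` set Wl"
  have cW: "card W \<le> 9"
  proof -
    have "card W \<le> card (set Wl)" unfolding W_def by (rule card_image_le) simp
    also have "\<dots> \<le> length Wl" by (rule card_length)
    finally show ?thesis by (simp add: Wl_def)
  qed
  have WV: "W \<subseteq> D_vertices P"
  proof
    fix w assume "w \<in> W"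
    then obtain a b where ab: "(a, b) \<in> set Wl" "w = closed_segment a b" unfolding W_def by auto
    then have "sepP P a b" using sepall by auto
    then show "w \<in> D_vertices P" using ab(2) unfolding sepP_def D_vertices_def by blast
  qed
  show ?thesis
  proof (rule mu_bound[OF fin WV cW])
    fix x y assume x: "x \<in> D_vertices P - W" and y: "y \<in> D_vertices P - W"
    obtain p q where pq: "x = closed_segment p q" "p \<in> P" "q \<in> P" using x D_vertices_elim by blast
    obtain p' q' where pq': "y = closed_segment p' q'" "p' \<in> P" "q' \<in> P" using y D_vertices_elim by blast
    obtain a b where ab: "(a, b) \<in> set Wl" "a \<notin> {p, q, p', q'}" "b \<notin> {p, q, p', q'}"
      using comb[of p q p' q'] by blast
    have sab: "sepP P a b" using sepall ab(1) by auto
    have "x \<inter> closed_segment a b = {}" using witness_from_sepP[OF sab pq(2,3)] ab pq(1) by auto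
    moreover have "closed_segment a b \<inter> y = {}" using witness_from_sepP[OF sab pq'(2,3)] ab pq'(1) by auto
    moreover have "closed_segment a b \<in> W" using ab(1) unfolding W_def by force
    ultimately show "\<exists>w\<in>W. x \<inter> w = {} \<and> w \<inter> y = {}" by blast
  qed
qed

lemma core_empty:
  assumes fin: "finite P" and gp: "general_position P" and pe: "pent P v1 v2 v3 v4 v5"
    and emp: "\<forall>p\<in>P - {v1, v2, v3}. orient v1 v3 p > 0"
  shows "mu (D_vertices P) D_adj \<ge> (card P choose 2) - 9"
proof -
  define Wl where "Wl = [(v1,v2),(v2,v3),(v3,v4),(v4,v5),(v5,v1),(v1,v4),(v2,v4),(v2,v5),(v3,v5)]"
  define El where "El = [(v1,v2),(v2,v3),(v3,v4),(v4,v5),(v5,v1)]"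
  have ed: "Edge P v1 v2" "Edge P v2 v3" "Edge P v3 v4" "Edge P v4 v5" "Edge P v5 v1"
    using pe unfolding pent_def by auto
  have sepE: "\<forall>(a,b)\<in>set El. sepP P a b"
    using edge_sepP[OF ed(1)] edge_sepP[OF ed(2)] edge_sepP[OF ed(3)] edge_sepP[OF ed(4)]
      edge_sepP[OF ed(5)] unfolding El_def by auto
  have dv: "distinct [v1, v2, v3, v4, v5]" using pe unfolding pent_def by simp
  have mem: "v1 \<in> P" "v2 \<in> P" "v3 \<in> P" "v4 \<in> P" "v5 \<in> P" using pent_mem[OF pe] by auto
  define W where "W = (\<lambda>(a, b). closed_segment a b) ` set Wl"
  have cW: "card W \<le> 9"
  proof -
    have "card W \<le> card (set Wl)" unfolding W_def by (rule card_image_le) simp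
    also have "\<dots> \<le> length Wl" by (rule card_length)
    finally show ?thesis by (simp add: Wl_def)
  qed
  have WV: "W \<subseteq> D_vertices P"
  proof
    fix w assume "w \<in> W"
    then obtain a b where ab: "(a, b) \<in> set Wl" "w = closed_segment a b" unfolding W_def by auto
    have "a \<in> P \<and> b \<in> P \<and> a \<noteq> b" using ab(1) dv mem unfolding Wl_def by auto
    then show "w \<in> D_vertices P" using ab(2) unfolding D_vertices_def by blast
  qed
  have EW: "closed_segment a b \<in> W" if "(a, b) \<in> set El" for a b
  proof -
    have "(a, b) \<in> set Wl" using that unfolding El_def Wl_def by auto
    then show ?thesis unfolding W_def by (rule image_eqI[rotated]) simp
  qed
  show ?thesis
  proof (rule mu_bound[OF fin WV cW])
    fix x y assume x: "x \<in> D_vertices P - W" and y: "y \<in> D_vertices P - W" and xy: "x \<noteq> y"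
      and xyi: "x \<inter> y \<noteq> {}"
    obtain p q where pq: "x = closed_segment p q" "p \<in> P" "q \<in> P" "p \<noteq> q"
      using x D_vertices_elim by blast
    obtain p' q' where pq': "y = closed_segment p' q'" "p' \<in> P" "q' \<in> P" "p' \<noteq> q'"
      using y D_vertices_elim by blast
    have notW: "\<forall>(a, b)\<in>set Wl. {p, q} \<noteq> {a, b} \<and> {p', q'} \<noteq> {a, b}"
    proof (intro ballI)
      fix z assume z: "z \<in> set Wl"
      obtain a b where zab: "z = (a, b)" by (cases z)
      have "closed_segment a b \<in> W" using z zab unfolding W_def by (intro image_eqI[rotated]) auto
      have "{p, q} \<noteq> {a, b}"
      proof
        assume "{p, q} = {a, b}"
        then have "closed_segment p q = closed_segment a b" by simp
        then show False using \<open>closed_segment a b \<in> W\<close> x pq(1) by (metis DiffD2)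
      qed
      moreover have "{p', q'} \<noteq> {a, b}"
      proof
        assume "{p', q'} = {a, b}"
        then have "closed_segment p' q' = closed_segment a b" by simp
        then show False using \<open>closed_segment a b \<in> W\<close> y pq'(1) by (metis DiffD2)
      qed
      ultimately have "{p, q} \<noteq> {a, b} \<and> {p', q'} \<noteq> {a, b}" by blast
      then show "case z of (a, b) \<Rightarrow> {p, q} \<noteq> {a, b} \<and> {p', q'} \<noteq> {a, b}" using zab by simp
    qed
    have neq: "{p, q} \<noteq> {p', q'}" using xy pq(1) pq'(1) by auto
    have "(\<exists>(a, b)\<in>set El. a \<notin> {p, q, p', q'} \<and> b \<notin> {p, q, p', q'})
     \<or> ({p, q} = {v1, v3} \<and> p' \<notin> {v1, v2, v3} \<and> q' \<notin> {v1, v2, v3})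
     \<or> ({p', q'} = {v1, v3} \<and> p \<notin> {v1, v2, v3} \<and> q \<notin> {v1, v2, v3})"
      unfolding El_def by (rule comb_empty[OF dv pq(4) pq'(4) neq notW[unfolded Wl_def]])
    then show "\<exists>w\<in>W. x \<inter> w = {} \<and> w \<inter> y = {}"
    proof (elim disjE)
      assume "\<exists>(a, b)\<in>set El. a \<notin> {p, q, p', q'} \<and> b \<notin> {p, q, p', q'}"
      then obtain a b where ab: "(a, b) \<in> set El" "a \<notin> {p, q, p', q'}" "b \<notin> {p, q, p', q'}" by blast
      have sab: "sepP P a b" using sepE ab(1) by auto
      have "x \<inter> closed_segment a b = {}" using witness_from_sepP[OF sab pq(2,3)] ab pq(1) by auto
      moreover have "closed_segment a b \<inter> y = {}" using witness_from_sepP[OF sab pq'(2,3)] ab pq'(1) by auto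
      ultimately show ?thesis using EW[OF ab(1)] by blast
    next
      assume h: "{p, q} = {v1, v3} \<and> p' \<notin> {v1, v2, v3} \<and> q' \<notin> {v1, v2, v3}"
      then have "x = closed_segment v1 v3" using pq(1) by simp
      moreover have "orient v1 v3 p' > 0" "orient v1 v3 q' > 0" using emp h pq'(2,3) by auto
      ultimately have "x \<inter> y = {}" using sep_strict pq'(1) by simp
      then show ?thesis using xyi by blast
    next
      assume h: "{p', q'} = {v1, v3} \<and> p \<notin> {v1, v2, v3} \<and> q \<notin> {v1, v2, v3}"
      then have "y = closed_segment v1 v3" using pq'(1) by simp
      moreover have "orient v1 v3 p > 0" "orient v1 v3 q > 0" using emp h pq(2,3) by auto
      ultimately have "y \<inter> x = {}" using sep_strict pq(1) by simp
      then show ?thesis using xyi by blast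
    qed
  qed
qed

theorem lemma14:
  fixes P :: "(real^2) set" and n :: nat
  assumes "finite P" and "card P = n" and "n \<ge> 5"
    and "general_position P"
    and "card (P \<inter> frontier (convex hull P)) = 5"
  shows "mu (D_vertices P) D_adj \<ge> (n choose 2) - 9"
proof -
  note fin = assms(1) and gp = assms(4)
  have c5: "5 \<le> card P" using assms(2,3) by simp
  from pentagon[OF assms(1) assms(4) c5 assms(5)] obtain v1 v2 v3 v4 v5 where pe: "pent P v1 v2 v3 v4 v5" unfolding pent_def by blast
  have pe2: "pent P v2 v3 v4 v5 v1" using pent_rot[OF pe] .
  have pe3: "pent P v3 v4 v5 v1 v2" using pent_rot[OF pe2] .
  have pe4: "pent P v4 v5 v1 v2 v3" using pent_rot[OF pe3] .
  have pe5: "pent P v5 v1 v2 v3 v4" using pent_rot[OF pe4] .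
  have "mu (D_vertices P) D_adj \<ge> (card P choose 2) - 9"
  proof (cases "(\<forall>p\<in>P - {v1, v2, v3}. orient v1 v3 p > 0) \<or> (\<forall>p\<in>P - {v2, v3, v4}. orient v2 v4 p > 0)
      \<or> (\<forall>p\<in>P - {v3, v4, v5}. orient v3 v5 p > 0) \<or> (\<forall>p\<in>P - {v4, v5, v1}. orient v4 v1 p > 0)
      \<or> (\<forall>p\<in>P - {v5, v1, v2}. orient v5 v2 p > 0)")
    case True
    then show ?thesis
      using core_empty[OF fin gp pe] core_empty[OF fin gp pe2] core_empty[OF fin gp pe3]
        core_empty[OF fin gp pe4] core_empty[OF fin gp pe5] by blast
  next
    case False
    obtain r1 where t1: "eartop P v5 v1 v2 r1" using ear_cases[OF fin gp pe5] False by blast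
    obtain r2 where t2: "eartop P v1 v2 v3 r2" using ear_cases[OF fin gp pe] False by blast
    obtain r3 where t3: "eartop P v2 v3 v4 r3" using ear_cases[OF fin gp pe2] False by blast
    obtain r4 where t4: "eartop P v3 v4 v5 r4" using ear_cases[OF fin gp pe3] False by blast
    obtain r5 where t5: "eartop P v4 v5 v1 r5" using ear_cases[OF fin gp pe4] False by blast
    have r13: "r1 \<noteq> r3" using tops_distinct[OF pe5 t1 t3] .
    show ?thesis
    proof (cases "r1 = r2")
      case False
      then show ?thesis using core_tops[OF fin gp pe t1 t2 t3 t4 t5] by blast
    next
      case True
      then have "r2 \<noteq> r3" using r13 by simp
      then show ?thesis using core_tops[OF fin gp pe2 t2 t3 t4 t5 t1] by blast
    qed
  qed
  then show ?thesis using assms(2) by simp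
qed

end
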